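(* Let $n\ge2$, let $F\in C^3(\mathbb{R}^n\setminus\{0\})$ be a strongly convex norm on $\mathbb{R}^n$, and let $u$ be a $C^2$ function on an open set $U\subset\mathbb{R}^n$. With the summation convention, $F=F(\nabla u)$, $F_i=F_{\xi_i}(\nabla u)$, $a_{ij}=\frac{\partial^2}{\partial\xi_i\partial\xi_j}(\tfrac12F^2)(\nabla u)$ and $u_{ij}=\partial^2u/\partial x_i\partial x_j$, at every point where $\nabla u\ne0$ one has $$a_{ij}a_{kl}u_{ik}u_{jl}\ge\frac{(a_{ij}u_{ij})^2}{n}+\frac{n}{n-1}\Big(\frac{a_{ij}u_{ij}}{n}-F_iF_ju_{ij}\Big)^2.$$
   Context: A norm on $\mathbb{R}^n$ is a convex, even, positively $1$-homogeneous function $F:\mathbb{R}^n\to[0,\infty)$, $C^1$ away from $0$, positive away from $0$. It is strongly convex if $\mathrm{Hess}(F^2)$ is positive definite on $\mathbb{R}^n\setminus\{0\}$. *)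

theory Defs
  imports "HOL-Analysis.Analysis"
begin

definition pd :: "'n::finite \<Rightarrow> (real^'n \<Rightarrow> real) \<Rightarrow> real^'n \<Rightarrow> real" where
  "pd i f x = frechet_derivative f (at x) (axis i 1)"

fun Ck :: "nat \<Rightarrow> (real^'n::finite \<Rightarrow> real) \<Rightarrow> (real^'n) set \<Rightarrow> bool" where
  "Ck 0 f S = continuous_on S f"
| "Ck (Suc k) f S = ((\<forall>x\<in>S. f differentiable (at x)) \<and> (\<forall>i. Ck k (pd i f) S))"

definition grad :: "(real^'n::finite \<Rightarrow> real) \<Rightarrow> real^'n \<Rightarrow> real^'n" where
  "grad f x = (\<chi> i. pd i f x)"

definition is_Norm :: "(real^'n::finite \<Rightarrow> real) \<Rightarrow> bool" where
  "is_Norm F \<longleftrightarrow> convex_on UNIV F \<and> (\<forall>x. F (- x) = F x)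
     \<and> (\<forall>t>0. \<forall>x. F (t *\<^sub>R x) = t * F x)
     \<and> Ck 1 F (- {0}) \<and> (\<forall>x. F x \<ge> 0) \<and> (\<forall>x. x \<noteq> 0 \<longrightarrow> F x > 0)"

definition strongly_convex_Norm :: "(real^'n::finite \<Rightarrow> real) \<Rightarrow> bool" where
  "strongly_convex_Norm F \<longleftrightarrow> is_Norm F \<and>
     (\<forall>\<xi>. \<xi> \<noteq> 0 \<longrightarrow> (\<forall>v. v \<noteq> 0 \<longrightarrow>
        (\<Sum>i\<in>UNIV. \<Sum>j\<in>UNIV. pd i (pd j (\<lambda>z. (F z)^2)) \<xi> * v$i * v$j) > 0))"

end

theory Submission
  imports Defs
begin


lemma CS_double:
  fixes B Z :: "'a::finite \<Rightarrow> 'a \<Rightarrow> real"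
  shows "(\<Sum>p\<in>UNIV. \<Sum>q\<in>UNIV. B p q * Z p q)^2 \<le> (\<Sum>p\<in>UNIV. \<Sum>q\<in>UNIV. (B p q)^2) * (\<Sum>p\<in>UNIV. \<Sum>q\<in>UNIV. (Z p q)^2)"
proof -
  have e: "\<And>f::'a\<Rightarrow>'a\<Rightarrow>real. (\<Sum>p\<in>UNIV. \<Sum>q\<in>UNIV. f p q) = (\<Sum>x\<in>UNIV \<times> UNIV. f (fst x) (snd x))"
    unfolding sum.cartesian_product by (simp only: case_prod_beta')
  show ?thesis unfolding e by (rule Cauchy_Schwarz_ineq_sum)
qed

lemma euclid_core:
  fixes M :: "'n::finite \<Rightarrow> 'n \<Rightarrow> real" and w :: "'n \<Rightarrow> real"
  assumes n2: "CARD('n) \<ge> 2" and w1: "(\<Sum>p\<in>UNIV. (w p)^2) = 1"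
  shows "(\<Sum>p\<in>UNIV. \<Sum>q\<in>UNIV. (M p q)^2) \<ge> (\<Sum>p\<in>UNIV. M p p)^2 / real CARD('n)
     + real CARD('n) / (real CARD('n) - 1) * ((\<Sum>p\<in>UNIV. M p p) / real CARD('n) - (\<Sum>p\<in>UNIV. \<Sum>q\<in>UNIV. w p * w q * M p q))^2"
proof -
  define n where "n = real CARD('n)"
  define T where "T = (\<Sum>p\<in>UNIV. M p p)"
  define Q where "Q = (\<Sum>p\<in>UNIV. \<Sum>q\<in>UNIV. w p * w q * M p q)"
  define SM where "SM = (\<Sum>p\<in>UNIV. \<Sum>q\<in>UNIV. (M p q)^2)"
  define B where "B p q = M p q - (if p = q then T/n else 0)" for p q
  define Z where "Z p q = n * w p * w q - (if p = q then 1 else 0)" for p q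
  have n1: "n > 1" using n2 unfolding n_def by simp
  have SB: "(\<Sum>p\<in>UNIV. \<Sum>q\<in>UNIV. (B p q)^2) = SM - T^2/n"
  proof -
    have "\<And>p q. (B p q)^2 = (M p q)^2 - (if p = q then 2 * (T/n) * M p q - (T/n)^2 else 0)"
      unfolding B_def by (auto simp: power2_eq_square algebra_simps)
    hence "(\<Sum>p\<in>UNIV. \<Sum>q\<in>UNIV. (B p q)^2) = SM - (\<Sum>p\<in>UNIV. 2 * (T/n) * M p p - (T/n)^2)"
      by (simp add: SM_def sum_subtractf)
    also have "\<dots> = SM - (2 * (T/n) * T - n * (T/n)^2)"
      by (simp add: sum_subtractf sum_distrib_left T_def n_def)
    also have "\<dots> = SM - T^2/n" using n1 by (simp add: field_simps power2_eq_square)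
    finally show ?thesis .
  qed
  have BZ: "(\<Sum>p\<in>UNIV. \<Sum>q\<in>UNIV. B p q * Z p q) = n * Q - T"
  proof -
    have "\<And>p q. B p q * Z p q = n * (w p * w q * M p q)
         - (if p = q then M p q + n * (T/n) * (w p)^2 - T/n else 0)"
      unfolding B_def Z_def by (auto simp: algebra_simps power2_eq_square)
    hence "(\<Sum>p\<in>UNIV. \<Sum>q\<in>UNIV. B p q * Z p q) = n * Q - (T + n * (T/n) * 1 - n * (T/n))"
      unfolding w1[symmetric] by (simp add: sum_subtractf Q_def sum_distrib_left T_def n_def sum.distrib)
    thus ?thesis by simp
  qed
  have ZZ: "(\<Sum>p\<in>UNIV. \<Sum>q\<in>UNIV. (Z p q)^2) = n * (n - 1)"
  proof -
    have "\<And>p q. (Z p q)^2 = n^2 * ((w p)^2 * (w q)^2) - (if p = q then 2 * n * (w p)^2 - 1 else 0)"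
      unfolding Z_def by (auto simp: power2_eq_square algebra_simps)
    hence "(\<Sum>p\<in>UNIV. \<Sum>q\<in>UNIV. (Z p q)^2) = (\<Sum>p\<in>UNIV. \<Sum>q\<in>UNIV. n^2 * ((w p)^2 * (w q)^2)) - (\<Sum>p\<in>UNIV. 2 * n * (w p)^2 - 1)"
      by (simp add: sum_subtractf)
    also have "(\<Sum>p\<in>UNIV. \<Sum>q\<in>UNIV. n^2 * ((w p)^2 * (w q)^2)) = n^2 * ((\<Sum>p\<in>UNIV. (w p)^2) * (\<Sum>q\<in>UNIV. (w q)^2))"
    proof -
      have "\<And>p. (\<Sum>q\<in>UNIV. n^2 * ((w p)^2 * (w q)^2)) = n^2 * (w p)^2 * (\<Sum>q\<in>UNIV. (w q)^2)"
        by (simp add: sum_distrib_left mult.assoc)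
      hence "(\<Sum>p\<in>UNIV. \<Sum>q\<in>UNIV. n^2 * ((w p)^2 * (w q)^2)) = (\<Sum>p\<in>UNIV. n^2 * (w p)^2 * (\<Sum>q\<in>UNIV. (w q)^2))"
        by simp
      also have "\<dots> = n^2 * ((\<Sum>p\<in>UNIV. (w p)^2) * (\<Sum>q\<in>UNIV. (w q)^2))"
        by (simp only: sum_distrib_right[symmetric] sum_distrib_left[symmetric] mult.assoc)
      finally show ?thesis .
    qed
    also have "(\<Sum>p\<in>UNIV. 2 * n * (w p)^2 - 1) = 2 * n * (\<Sum>p\<in>UNIV. (w p)^2) - n"
      by (simp add: sum_subtractf sum_distrib_left n_def)
    finally have "(\<Sum>p\<in>UNIV. \<Sum>q\<in>UNIV. (Z p q)^2) = n^2 * ((\<Sum>p\<in>UNIV. (w p)^2) * (\<Sum>q\<in>UNIV. (w q)^2)) - (2 * n * (\<Sum>p\<in>UNIV. (w p)^2) - n)" .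
    thus ?thesis using w1 by (simp add: power2_eq_square algebra_simps)
  qed
  have CS: "(n * Q - T)^2 \<le> (SM - T^2/n) * (n * (n - 1))"
    using CS_double[of B Z] SB BZ ZZ by simp
  have "n^2 * (T/n - Q)^2 = (n * Q - T)^2" using n1 by (simp add: field_simps power2_eq_square)
  hence key: "n^2 * (T/n - Q)^2 \<le> (SM - T^2/n) * (n * (n - 1))" using CS by simp
  have "n / (n - 1) * (T/n - Q)^2 \<le> SM - T^2/n"
  proof -
    have "n / (n - 1) * (T/n - Q)^2 = (n^2 * (T/n - Q)^2) / (n * (n - 1))"
      using n1 by (simp add: field_simps power2_eq_square)
    also have "\<dots> \<le> SM - T^2/n" using key n1 by (simp add: divide_le_eq mult_pos_pos)
    finally show ?thesis .
  qed
  thus ?thesis unfolding SM_def T_def Q_def n_def by simp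
qed


lemma chol_fin:
  fixes I :: "'a set"
  assumes "finite I"
  shows "\<forall>a::'a\<Rightarrow>'a\<Rightarrow>real. (\<forall>i\<in>I. \<forall>j\<in>I. a i j = a j i) \<and>
     (\<forall>w. (\<exists>i\<in>I. w i \<noteq> 0) \<longrightarrow> (\<Sum>i\<in>I. \<Sum>j\<in>I. a i j * w i * w j) > 0)
     \<longrightarrow> (\<exists>c. \<forall>i\<in>I. \<forall>j\<in>I. a i j = (\<Sum>k\<in>I. c k i * c k j))"
  using assms
proof (induction I rule: finite_induct)
  case empty
  then show ?case by simp
next
  case (insert m I)
  show ?case
  proof (intro allI impI, elim conjE)
    fix a :: "'a\<Rightarrow>'a\<Rightarrow>real"
    assume sym: "\<forall>i\<in>insert m I. \<forall>j\<in>insert m I. a i j = a j i"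
      and pd: "\<forall>w. (\<exists>i\<in>insert m I. w i \<noteq> 0) \<longrightarrow> (\<Sum>i\<in>insert m I. \<Sum>j\<in>insert m I. a i j * w i * w j) > 0"
    have amm: "a m m > 0"
    proof -
      have "(\<Sum>i\<in>insert m I. \<Sum>j\<in>insert m I. a i j * (if i = m then 1 else 0) * (if j = m then 1 else 0)) > 0"
        using pd[rule_format, of "\<lambda>i. if i = m then 1 else 0"] by simp
      moreover have "(\<Sum>i\<in>insert m I. \<Sum>j\<in>insert m I. a i j * (if i = m then 1 else 0) * (if j = m then 1 else 0)) = a m m"
      proof -
        have ne: "\<And>i. i \<in> I \<Longrightarrow> (i = m) = False" using insert.hyps by auto
        show ?thesis using insert.hyps by (simp add: ne cong: sum.cong)
      qed
      ultimately show ?thesis by simp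
    qed
    define a' where "a' i j = a i j - a i m * a m j / a m m" for i j
    have sym': "\<forall>i\<in>I. \<forall>j\<in>I. a' i j = a' j i"
    proof (intro ballI)
      fix i j assume i: "i \<in> I" and j: "j \<in> I"
      have e1: "a i j = a j i" using sym i j by blast
      have e2: "a i m = a m i" using sym i by blast
      have e3: "a m j = a j m" using sym j by blast
      show "a' i j = a' j i" unfolding a'_def e1 e2 e3 by (simp add: mult.commute)
    qed
    have pd': "\<forall>w. (\<exists>i\<in>I. w i \<noteq> 0) \<longrightarrow> (\<Sum>i\<in>I. \<Sum>j\<in>I. a' i j * w i * w j) > 0"
    proof (intro allI impI)
      fix w :: "'a \<Rightarrow> real"
      assume "\<exists>i\<in>I. w i \<noteq> 0"
      define b where "b = (\<Sum>j\<in>I. a m j * w j)"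
      define t where "t = - b / a m m"
      define w' where "w' = w(m := t)"
      have w'I: "\<And>i. i \<in> I \<Longrightarrow> w' i = w i" using insert.hyps by (auto simp: w'_def)
      have "\<exists>i\<in>insert m I. w' i \<noteq> 0" using \<open>\<exists>i\<in>I. w i \<noteq> 0\<close> w'I by auto
      hence pos: "(\<Sum>i\<in>insert m I. \<Sum>j\<in>insert m I. a i j * w' i * w' j) > 0" using pd by blast
      have sb: "(\<Sum>i\<in>I. a i m * w i) = b" unfolding b_def
      proof (rule sum.cong[OF refl])
        fix i assume "i \<in> I"
        hence "a i m = a m i" using sym by blast
        thus "a i m * w i = a m i * w i" by simp
      qed
      have wm: "w' m = t" by (simp add: w'_def)
      let ?q = "(\<Sum>i\<in>I. \<Sum>j\<in>I. a i j * w i * w j)"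
      have inner: "(\<Sum>j\<in>insert m I. a i j * w' i * w' j) = a i m * w' i * t + w' i * (\<Sum>j\<in>I. a i j * w j)" for i
      proof -
        have "(\<Sum>j\<in>insert m I. a i j * w' i * w' j) = a i m * w' i * w' m + (\<Sum>j\<in>I. a i j * w' i * w' j)"
          by (rule sum.insert[OF insert.hyps])
        also have "(\<Sum>j\<in>I. a i j * w' i * w' j) = (\<Sum>j\<in>I. w' i * (a i j * w j))"
          by (rule sum.cong[OF refl]) (simp add: w'I mult_ac)
        also have "\<dots> = w' i * (\<Sum>j\<in>I. a i j * w j)" by (simp only: sum_distrib_left)
        finally show ?thesis by (simp only: wm)
      qed
      have outer: "(\<Sum>i\<in>I. a i m * w' i * t + w' i * (\<Sum>j\<in>I. a i j * w j)) = b * t + ?q"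
      proof -
        have "(\<Sum>i\<in>I. a i m * w' i * t + w' i * (\<Sum>j\<in>I. a i j * w j))
            = (\<Sum>i\<in>I. (a i m * w i) * t + (\<Sum>j\<in>I. a i j * w i * w j))"
          by (rule sum.cong[OF refl]) (simp add: w'I sum_distrib_left mult_ac)
        also have "\<dots> = (\<Sum>i\<in>I. a i m * w i) * t + ?q"
          by (simp only: sum.distrib sum_distrib_right)
        finally show ?thesis by (simp only: sb)
      qed
      have "(\<Sum>i\<in>insert m I. \<Sum>j\<in>insert m I. a i j * w' i * w' j)
          = (a m m * t * t + t * b) + (b * t + ?q)"
      proof -
        have "(\<Sum>i\<in>insert m I. \<Sum>j\<in>insert m I. a i j * w' i * w' j)
           = (\<Sum>i\<in>insert m I. a i m * w' i * t + w' i * (\<Sum>j\<in>I. a i j * w j))"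
          by (simp only: inner)
        also have "\<dots> = (a m m * w' m * t + w' m * (\<Sum>j\<in>I. a m j * w j)) + (\<Sum>i\<in>I. a i m * w' i * t + w' i * (\<Sum>j\<in>I. a i j * w j))"
          by (rule sum.insert[OF insert.hyps])
        also have "\<dots> = (a m m * t * t + t * b) + (b * t + ?q)"
          by (simp only: outer wm b_def[symmetric])
        finally show ?thesis .
      qed
      also have "\<dots> = ?q - b^2 / a m m"
        using amm unfolding t_def by (simp add: field_simps power2_eq_square)
      also have "\<dots> = (\<Sum>i\<in>I. \<Sum>j\<in>I. a' i j * w i * w j)"
      proof -
        have pt: "a' i j * w i * w j = a i j * w i * w j - (a i m * w i) * (a m j * w j) / a m m" for i j
          unfolding a'_def by (simp add: algebra_simps)
        have "(\<Sum>i\<in>I. \<Sum>j\<in>I. a' i j * w i * w j) = ?q - (\<Sum>i\<in>I. \<Sum>j\<in>I. (a i m * w i) * (a m j * w j) / a m m)"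
          by (simp only: pt sum_subtractf)
        also have "(\<Sum>i\<in>I. \<Sum>j\<in>I. (a i m * w i) * (a m j * w j) / a m m) = (\<Sum>i\<in>I. a i m * w i) * b / a m m"
          unfolding b_def by (simp only: sum_product sum_divide_distrib)
        finally show ?thesis using sb by (simp add: power2_eq_square)
      qed
      finally show "(\<Sum>i\<in>I. \<Sum>j\<in>I. a' i j * w i * w j) > 0" using pos by simp
    qed
    obtain c' where c': "\<forall>i\<in>I. \<forall>j\<in>I. a' i j = (\<Sum>k\<in>I. c' k i * c' k j)"
      using insert.IH sym' pd' by blast
    define c where "c k i = (if k = m then a m i / sqrt (a m m) else (if i = m then 0 else c' k i))" for k i
    have cmi: "c m i = a m i / sqrt (a m m)" for i by (simp add: c_def)
    have sq: "sqrt (a m m) * sqrt (a m m) = a m m" using amm by simp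
    have cm: "c m i * c m j = a m i * a m j / a m m" for i j
      unfolding cmi times_divide_times_eq sq by (rule refl)
    show "\<exists>c. \<forall>i\<in>insert m I. \<forall>j\<in>insert m I. a i j = (\<Sum>k\<in>insert m I. c k i * c k j)"
    proof (intro exI ballI)
      fix i j assume i: "i \<in> insert m I" and j: "j \<in> insert m I"
      have "(\<Sum>k\<in>insert m I. c k i * c k j) = c m i * c m j + (\<Sum>k\<in>I. c k i * c k j)"
        using insert.hyps by simp
      also have "\<dots> = a i j"
      proof (cases "i = m \<or> j = m")
        case True
        have "(\<Sum>k\<in>I. c k i * c k j) = 0" using True insert.hyps
          by (intro sum.neutral) (auto simp: c_def)
        have "a i j = c m i * c m j"
        proof (cases "i = m")
          case True
          hence "c m i * c m j = a m m * a m j / a m m" using cm by simp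
          also have "\<dots> = a m j" using amm by simp
          finally show ?thesis using True by simp
        next
          case False
          hence jm: "j = m" using \<open>i = m \<or> j = m\<close> by simp
          have "c m i * c m j = a m i * a m m / a m m" using cm jm by simp
          also have "\<dots> = a m i" using amm by simp
          also have "\<dots> = a i m" using sym i by blast
          finally show ?thesis using jm by simp
        qed
        then show ?thesis using \<open>(\<Sum>k\<in>I. c k i * c k j) = 0\<close> by simp
      next
        case False
        hence iI: "i \<in> I" and jI: "j \<in> I" using i j by auto
        have "(\<Sum>k\<in>I. c k i * c k j) = (\<Sum>k\<in>I. c' k i * c' k j)" using False insert.hyps
          by (intro sum.cong) (auto simp: c_def)
        also have "\<dots> = a' i j" using c' iI jI by simp
        moreover have "a m i = a i m" using sym iI by blast
        ultimately show ?thesis using cm amm by (simp add: a'_def)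
      qed
      finally show "a i j = (\<Sum>k\<in>insert m I. c k i * c k j)" by simp
    qed
  qed
qed



lemma pull2: "(\<Sum>i\<in>A. \<Sum>j\<in>B. \<Sum>p\<in>P. H i j p) = (\<Sum>p\<in>P. \<Sum>i\<in>A. \<Sum>j\<in>B. (H i j p :: real))"
proof -
  have "\<And>i. (\<Sum>j\<in>B. \<Sum>p\<in>P. H i j p) = (\<Sum>p\<in>P. \<Sum>j\<in>B. H i j p)" by (rule sum.swap)
  hence "(\<Sum>i\<in>A. \<Sum>j\<in>B. \<Sum>p\<in>P. H i j p) = (\<Sum>i\<in>A. \<Sum>p\<in>P. \<Sum>j\<in>B. H i j p)" by simp
  also have "\<dots> = (\<Sum>p\<in>P. \<Sum>i\<in>A. \<Sum>j\<in>B. H i j p)" by (rule sum.swap)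
  finally show ?thesis .
qed

lemma pull3: "(\<Sum>i\<in>A. \<Sum>j\<in>B. \<Sum>k\<in>C. \<Sum>p\<in>P. H i j k p) = (\<Sum>p\<in>P. \<Sum>i\<in>A. \<Sum>j\<in>B. \<Sum>k\<in>C. (H i j k p :: real))"
proof -
  have "\<And>i. (\<Sum>j\<in>B. \<Sum>k\<in>C. \<Sum>p\<in>P. H i j k p) = (\<Sum>p\<in>P. \<Sum>j\<in>B. \<Sum>k\<in>C. H i j k p)" by (rule pull2)
  hence "(\<Sum>i\<in>A. \<Sum>j\<in>B. \<Sum>k\<in>C. \<Sum>p\<in>P. H i j k p) = (\<Sum>i\<in>A. \<Sum>p\<in>P. \<Sum>j\<in>B. \<Sum>k\<in>C. H i j k p)" by simp
  also have "\<dots> = (\<Sum>p\<in>P. \<Sum>i\<in>A. \<Sum>j\<in>B. \<Sum>k\<in>C. H i j k p)" by (rule sum.swap)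
  finally show ?thesis .
qed

lemma pull4: "(\<Sum>i\<in>A. \<Sum>j\<in>B. \<Sum>k\<in>C. \<Sum>l\<in>D. \<Sum>p\<in>P. H i j k l p) = (\<Sum>p\<in>P. \<Sum>i\<in>A. \<Sum>j\<in>B. \<Sum>k\<in>C. \<Sum>l\<in>D. (H i j k l p :: real))"
proof -
  have "\<And>i. (\<Sum>j\<in>B. \<Sum>k\<in>C. \<Sum>l\<in>D. \<Sum>p\<in>P. H i j k l p) = (\<Sum>p\<in>P. \<Sum>j\<in>B. \<Sum>k\<in>C. \<Sum>l\<in>D. H i j k l p)" by (rule pull3)
  hence "(\<Sum>i\<in>A. \<Sum>j\<in>B. \<Sum>k\<in>C. \<Sum>l\<in>D. \<Sum>p\<in>P. H i j k l p) = (\<Sum>i\<in>A. \<Sum>p\<in>P. \<Sum>j\<in>B. \<Sum>k\<in>C. \<Sum>l\<in>D. H i j k l p)" by simp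
  also have "\<dots> = (\<Sum>p\<in>P. \<Sum>i\<in>A. \<Sum>j\<in>B. \<Sum>k\<in>C. \<Sum>l\<in>D. H i j k l p)" by (rule sum.swap)
  finally show ?thesis .
qed

lemma translate:
  fixes a h c :: "'n::finite \<Rightarrow> 'n \<Rightarrow> real" and p v :: "'n \<Rightarrow> real"
  assumes ca: "\<And>i j. a i j = (\<Sum>k\<in>UNIV. c k i * c k j)"
    and Av: "\<And>i. (\<Sum>j\<in>UNIV. a i j * v j) = p i"
    and pv: "(\<Sum>i\<in>UNIV. p i * v i) = 1"
  defines "M \<equiv> (\<lambda>p q. \<Sum>i\<in>UNIV. \<Sum>k\<in>UNIV. c p i * h i k * c q k)"
    and "w \<equiv> (\<lambda>q. \<Sum>j\<in>UNIV. c q j * v j)"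
  shows "(\<Sum>i\<in>UNIV. \<Sum>j\<in>UNIV. \<Sum>k\<in>UNIV. \<Sum>l\<in>UNIV. a i j * a k l * h i k * h j l) = (\<Sum>p\<in>UNIV. \<Sum>q\<in>UNIV. (M p q)^2)"
    and "(\<Sum>i\<in>UNIV. \<Sum>j\<in>UNIV. a i j * h i j) = (\<Sum>p\<in>UNIV. M p p)"
    and "(\<Sum>i\<in>UNIV. \<Sum>j\<in>UNIV. p i * p j * h i j) = (\<Sum>k\<in>UNIV. \<Sum>l\<in>UNIV. w k * w l * M k l)"
    and "(\<Sum>k\<in>UNIV. (w k)^2) = 1"
proof -
  define T where "T i j k l p q = c q i * c q j * c p k * c p l * h i k * h j l" for i j k l p q
  have "(\<Sum>i\<in>UNIV. \<Sum>j\<in>UNIV. \<Sum>k\<in>UNIV. \<Sum>l\<in>UNIV. a i j * a k l * h i k * h j l)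
     = (\<Sum>i\<in>UNIV. \<Sum>j\<in>UNIV. \<Sum>k\<in>UNIV. \<Sum>l\<in>UNIV. \<Sum>p\<in>UNIV. \<Sum>q\<in>UNIV. T i j k l p q)"
    unfolding ca T_def by (simp add: sum_distrib_left sum_distrib_right mult_ac)
  also have "\<dots> = (\<Sum>p\<in>UNIV. \<Sum>i\<in>UNIV. \<Sum>j\<in>UNIV. \<Sum>k\<in>UNIV. \<Sum>l\<in>UNIV. \<Sum>q\<in>UNIV. T i j k l p q)"
    by (rule pull4)
  also have "\<dots> = (\<Sum>p\<in>UNIV. \<Sum>q\<in>UNIV. \<Sum>i\<in>UNIV. \<Sum>j\<in>UNIV. \<Sum>k\<in>UNIV. \<Sum>l\<in>UNIV. T i j k l p q)"
    by (rule sum.cong[OF refl], rule pull4)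
  also have "\<dots> = (\<Sum>p\<in>UNIV. \<Sum>q\<in>UNIV. \<Sum>i\<in>UNIV. \<Sum>j\<in>UNIV. \<Sum>l\<in>UNIV. \<Sum>k\<in>UNIV. T i j k l p q)"
  proof -
    have "\<And>p q i j. (\<Sum>k\<in>UNIV. \<Sum>l\<in>UNIV. T i j k l p q) = (\<Sum>l\<in>UNIV. \<Sum>k\<in>UNIV. T i j k l p q)"
      by (rule sum.swap)
    thus ?thesis by simp
  qed
  also have "\<dots> = (\<Sum>p\<in>UNIV. \<Sum>q\<in>UNIV. (M q p)^2)"
    unfolding M_def T_def power2_eq_square by (simp add: sum_distrib_left sum_distrib_right mult_ac)
  also have "\<dots> = (\<Sum>p\<in>UNIV. \<Sum>q\<in>UNIV. (M p q)^2)" by (rule sum.swap)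
  finally show "(\<Sum>i\<in>UNIV. \<Sum>j\<in>UNIV. \<Sum>k\<in>UNIV. \<Sum>l\<in>UNIV. a i j * a k l * h i k * h j l) = (\<Sum>p\<in>UNIV. \<Sum>q\<in>UNIV. (M p q)^2)" .
next
  have "(\<Sum>i\<in>UNIV. \<Sum>j\<in>UNIV. a i j * h i j) = (\<Sum>i\<in>UNIV. \<Sum>j\<in>UNIV. \<Sum>p\<in>UNIV. c p i * h i j * c p j)"
    unfolding ca by (simp add: sum_distrib_left sum_distrib_right mult_ac)
  also have "\<dots> = (\<Sum>p\<in>UNIV. M p p)" unfolding M_def by (rule pull2)
  finally show "(\<Sum>i\<in>UNIV. \<Sum>j\<in>UNIV. a i j * h i j) = (\<Sum>p\<in>UNIV. M p p)" .
next
  have pw: "p i = (\<Sum>k\<in>UNIV. c k i * w k)" for i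
  proof -
    have "p i = (\<Sum>j\<in>UNIV. \<Sum>k\<in>UNIV. c k i * c k j * v j)" unfolding Av[symmetric] ca
      by (simp add: sum_distrib_right)
    also have "\<dots> = (\<Sum>k\<in>UNIV. \<Sum>j\<in>UNIV. c k i * c k j * v j)" by (rule sum.swap)
    also have "\<dots> = (\<Sum>k\<in>UNIV. c k i * w k)" unfolding w_def by (simp add: sum_distrib_left mult_ac)
    finally show ?thesis .
  qed
  {
  have "(\<Sum>i\<in>UNIV. \<Sum>j\<in>UNIV. p i * p j * h i j) = (\<Sum>i\<in>UNIV. \<Sum>j\<in>UNIV. \<Sum>l\<in>UNIV. \<Sum>k\<in>UNIV. w k * w l * (c k i * h i j * c l j))"
    unfolding pw by (simp add: sum_distrib_left sum_distrib_right mult_ac)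
  also have "\<dots> = (\<Sum>k\<in>UNIV. \<Sum>i\<in>UNIV. \<Sum>j\<in>UNIV. \<Sum>l\<in>UNIV. w k * w l * (c k i * h i j * c l j))"
    by (rule pull3)
  also have "\<dots> = (\<Sum>k\<in>UNIV. \<Sum>l\<in>UNIV. \<Sum>i\<in>UNIV. \<Sum>j\<in>UNIV. w k * w l * (c k i * h i j * c l j))"
    by (rule sum.cong[OF refl], rule pull2)
  also have "\<dots> = (\<Sum>k\<in>UNIV. \<Sum>l\<in>UNIV. w k * w l * M k l)"
    unfolding M_def by (simp add: sum_distrib_left)
  finally show "(\<Sum>i\<in>UNIV. \<Sum>j\<in>UNIV. p i * p j * h i j) = (\<Sum>k\<in>UNIV. \<Sum>l\<in>UNIV. w k * w l * M k l)" .
  }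
  have "(\<Sum>k\<in>UNIV. (w k)^2) = (\<Sum>k\<in>UNIV. \<Sum>j\<in>UNIV. w k * c k j * v j)"
    unfolding power2_eq_square by (simp add: w_def sum_distrib_left mult_ac)
  also have "\<dots> = (\<Sum>j\<in>UNIV. \<Sum>k\<in>UNIV. w k * c k j * v j)" by (rule sum.swap)
  also have "\<dots> = (\<Sum>j\<in>UNIV. p j * v j)" unfolding pw by (simp add: sum_distrib_left sum_distrib_right mult_ac)
  finally show "(\<Sum>k\<in>UNIV. (w k)^2) = 1" using pv by simp
qed



lemma pd_local:
  assumes "open S" "x \<in> S" "\<And>y. y \<in> S \<Longrightarrow> f y = g y"
  shows "pd i f x = pd i g x"
proof -
  have "\<And>D. (f has_derivative D) (at x) \<longleftrightarrow> (g has_derivative D) (at x)"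
    using has_derivative_transform_within_open[OF _ assms(1,2), of f _ UNIV g]
          has_derivative_transform_within_open[OF _ assms(1,2), of g _ UNIV f] assms(3)
    by (metis (mono_tags))
  hence "frechet_derivative f (at x) = frechet_derivative g (at x)"
    unfolding frechet_derivative_def by simp
  thus ?thesis unfolding pd_def by simp
qed

lemma fd_works:
  assumes "f differentiable (at x)"
  shows "(f has_derivative frechet_derivative f (at x)) (at x)"
  using assms frechet_derivative_works by blast

lemma fd_expand:
  fixes f :: "real^'n::finite \<Rightarrow> real"
  assumes "f differentiable (at x)"
  shows "frechet_derivative f (at x) h = (\<Sum>i\<in>UNIV. h$i * pd i f x)"
proof -
  have lin: "linear (frechet_derivative f (at x))"
    using fd_works[OF assms] has_derivative_linear by blast
  have "frechet_derivative f (at x) h = frechet_derivative f (at x) (\<Sum>i\<in>UNIV. h$i *\<^sub>R axis i 1)"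
    using basis_expansion[of h] by (simp add: scalar_mult_eq_scaleR)
  also have "\<dots> = (\<Sum>i\<in>UNIV. h$i * pd i f x)"
    by (simp add: linear_sum[OF lin] linear_cmul[OF lin] pd_def o_def)
  finally show ?thesis .
qed

lemma line_deriv:
  fixes f :: "real^'n::finite \<Rightarrow> real"
  assumes "f differentiable (at (p + s *\<^sub>R e))"
  shows "((\<lambda>t. f (p + t *\<^sub>R e)) has_derivative (\<lambda>t. t * frechet_derivative f (at (p + s *\<^sub>R e)) e)) (at s)"
proof -
  let ?D = "frechet_derivative f (at (p + s *\<^sub>R e))"
  have Df: "(f has_derivative ?D) (at (p + s *\<^sub>R e))" using fd_works[OF assms] .
  have lin: "linear ?D" using Df has_derivative_linear by blast
  have l: "((\<lambda>t. p + t *\<^sub>R e) has_derivative (\<lambda>t. t *\<^sub>R e)) (at s)"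
    by (auto intro!: derivative_eq_intros)
  have "((\<lambda>t. f (p + t *\<^sub>R e)) has_derivative (\<lambda>t. ?D (t *\<^sub>R e))) (at s)"
    using has_derivative_compose[OF l Df] by simp
  moreover have "(\<lambda>t. ?D (t *\<^sub>R e)) = (\<lambda>t. t * ?D e)"
    by (rule ext) (simp add: linear_cmul[OF lin])
  ultimately show ?thesis by simp
qed


lemma schwarz_half:
  fixes f :: "real^'n::finite \<Rightarrow> real"
  assumes r: "r > 0" and diff: "\<And>y. y \<in> ball x r \<Longrightarrow> f differentiable (at y)"
    and gi: "pd i f differentiable (at x)" and e: "e > 0"
  shows "\<exists>d>0. \<forall>h. 0 < h \<and> h < d \<longrightarrow>
     \<bar>f (x + h *\<^sub>R axis j 1 + h *\<^sub>R axis i 1) - f (x + h *\<^sub>R axis i 1) - f (x + h *\<^sub>R axis j 1) + f x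
       - h^2 * pd j (pd i f) x\<bar> \<le> 3 * e * h^2"
proof -
  let ?g = "pd i f"
  let ?L = "frechet_derivative (pd i f) (at x)"
  have Lg: "(?g has_derivative ?L) (at x)" using fd_works[OF gi] .
  obtain d where d: "d > 0" "\<forall>y. norm (y - x) < d \<longrightarrow> norm (?g y - ?g x - ?L (y - x)) \<le> e * norm (y - x)"
    using Lg[unfolded has_derivative_at_alt] e by blast
  have lin: "linear ?L" using Lg has_derivative_linear by blast
  define ei where "ei = (axis i 1 :: real^'n)"
  define ej where "ej = (axis j 1 :: real^'n)"
  have nei: "norm ei = 1" "norm ej = 1" by (simp_all add: ei_def ej_def)
  show ?thesis
  proof (intro exI[of _ "min (d/2) (r/2)"] conjI allI impI)
    show "min (d/2) (r/2) > 0" using d r by simp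
    fix h :: real assume h: "0 < h \<and> h < min (d/2) (r/2)"
    define \<phi> where "\<phi> s = f ((x + h *\<^sub>R ej) + s *\<^sub>R ei) - f (x + s *\<^sub>R ei)" for s
    have n1: "norm (h *\<^sub>R ej + s *\<^sub>R ei) \<le> h + s" if "0 \<le> s" for s
      using norm_triangle_ineq[of "h *\<^sub>R ej" "s *\<^sub>R ei"] nei h that by simp
    have n2: "norm (s *\<^sub>R ei) = s" if "0 \<le> s" for s using nei that by simp
    have inb: "x + h *\<^sub>R ej + s *\<^sub>R ei \<in> ball x r \<and> x + s *\<^sub>R ei \<in> ball x r"
      if "0 \<le> s" "s \<le> h" for s
    proof -
      have dd: "\<And>v. dist x (x + v) = norm v" by (simp add: dist_norm)
      show ?thesis using dd[of "h *\<^sub>R ej + s *\<^sub>R ei"] dd[of "s *\<^sub>R ei"] n1[OF that(1)] n2[OF that(1)] that h nei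
        by (simp add: add.assoc)
    qed
    have der: "(\<phi> has_derivative (\<lambda>t. t * (?g (x + h *\<^sub>R ej + s *\<^sub>R ei) - ?g (x + s *\<^sub>R ei)))) (at s within {0..h})"
      if "0 \<le> s" "s \<le> h" for s
    proof -
      have d1: "((\<lambda>t. f ((x + h *\<^sub>R ej) + t *\<^sub>R ei)) has_derivative (\<lambda>t. t * ?g (x + h *\<^sub>R ej + s *\<^sub>R ei))) (at s)"
        using line_deriv[of f "x + h *\<^sub>R ej" s ei] diff inb[OF that] by (simp add: pd_def ei_def)
      have d2: "((\<lambda>t. f (x + t *\<^sub>R ei)) has_derivative (\<lambda>t. t * ?g (x + s *\<^sub>R ei))) (at s)"
        using line_deriv[of f x s ei] diff inb[OF that] by (simp add: pd_def ei_def)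
      have "(\<phi> has_derivative (\<lambda>t. t * ?g (x + h *\<^sub>R ej + s *\<^sub>R ei) - t * ?g (x + s *\<^sub>R ei))) (at s)"
        unfolding \<phi>_def using has_derivative_diff[OF d1 d2] by simp
      thus ?thesis by (simp add: right_diff_distrib has_derivative_at_withinI)
    qed
    obtain \<theta> where th: "\<theta> \<in> {0<..<h}"
      "\<phi> h - \<phi> 0 = (h - 0) * (?g (x + h *\<^sub>R ej + \<theta> *\<^sub>R ei) - ?g (x + \<theta> *\<^sub>R ei))"
      using mvt_simple[of 0 h \<phi>, OF _ der] h by auto
    define y1 where "y1 = x + h *\<^sub>R ej + \<theta> *\<^sub>R ei"
    define y2 where "y2 = x + \<theta> *\<^sub>R ei"
    have ny1: "norm (y1 - x) \<le> 2 * h" using n1[of \<theta>] th(1) by (simp add: y1_def)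
    have ny2: "norm (y2 - x) \<le> h" using n2[of \<theta>] th(1) by (simp add: y2_def)
    have b1: "\<bar>?g y1 - ?g x - ?L (y1 - x)\<bar> \<le> e * (2 * h)"
    proof -
      have "\<bar>?g y1 - ?g x - ?L (y1 - x)\<bar> \<le> e * norm (y1 - x)" using d(2) ny1 h by force
      also have "\<dots> \<le> e * (2 * h)" using ny1 e by (simp add: mult_left_mono)
      finally show ?thesis .
    qed
    have b2: "\<bar>?g y2 - ?g x - ?L (y2 - x)\<bar> \<le> e * h"
    proof -
      have "\<bar>?g y2 - ?g x - ?L (y2 - x)\<bar> \<le> e * norm (y2 - x)" using d(2) ny2 h by force
      also have "\<dots> \<le> e * h" using ny2 e by (simp add: mult_left_mono)
      finally show ?thesis .
    qed
    have Ld: "?L (y1 - x) - ?L (y2 - x) = h * pd j (pd i f) x"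
    proof -
      have "?L (y1 - x) - ?L (y2 - x) = ?L ((y1 - x) - (y2 - x))" by (simp add: linear_diff[OF lin])
      also have "(y1 - x) - (y2 - x) = h *\<^sub>R ej" by (simp add: y1_def y2_def)
      also have "?L (h *\<^sub>R ej) = h * ?L ej" by (simp add: linear_cmul[OF lin])
      finally show ?thesis by (simp add: pd_def[of j] ej_def)
    qed
    have "\<phi> h - \<phi> 0 = f (x + h *\<^sub>R ej + h *\<^sub>R ei) - f (x + h *\<^sub>R ei) - f (x + h *\<^sub>R ej) + f x"
      by (simp add: \<phi>_def)
    hence e1: "f (x + h *\<^sub>R ej + h *\<^sub>R ei) - f (x + h *\<^sub>R ei) - f (x + h *\<^sub>R ej) + f x = h * (?g y1 - ?g y2)"
      using th(2) by (simp add: y1_def y2_def)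
    have e2: "h * (?g y1 - ?g y2) - h^2 * pd j (pd i f) x = h * ((?g y1 - ?g x - ?L (y1 - x)) - (?g y2 - ?g x - ?L (y2 - x)))"
      using Ld by (simp add: power2_eq_square algebra_simps)
    have "\<bar>f (x + h *\<^sub>R ej + h *\<^sub>R ei) - f (x + h *\<^sub>R ei) - f (x + h *\<^sub>R ej) + f x - h^2 * pd j (pd i f) x\<bar>
        = h * \<bar>(?g y1 - ?g x - ?L (y1 - x)) - (?g y2 - ?g x - ?L (y2 - x))\<bar>"
      unfolding e1 e2 using h by (simp add: abs_mult)
    also have "\<dots> \<le> h * (e * (2 * h) + e * h)"
      using b1 b2 h by (intro mult_left_mono) (auto intro: order_trans[OF abs_triangle_ineq4])
    also have "\<dots> = 3 * e * h^2" by (simp add: power2_eq_square algebra_simps)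
    finally show "\<bar>f (x + h *\<^sub>R axis j 1 + h *\<^sub>R axis i 1) - f (x + h *\<^sub>R axis i 1) - f (x + h *\<^sub>R axis j 1) + f x
       - h^2 * pd j (pd i f) x\<bar> \<le> 3 * e * h^2" by (simp add: ei_def ej_def)
  qed
qed


lemma schwarz:
  fixes f :: "real^'n::finite \<Rightarrow> real"
  assumes r: "r > 0" and diff: "\<And>y. y \<in> ball x r \<Longrightarrow> f differentiable (at y)"
    and gi: "pd i f differentiable (at x)" and gj: "pd j f differentiable (at x)"
  shows "pd j (pd i f) x = pd i (pd j f) x"
proof -
  let ?A = "pd j (pd i f) x" and ?B = "pd i (pd j f) x"
  have bnd: "\<bar>?A - ?B\<bar> \<le> 6 * e" if e: "e > 0" for e
  proof -
    obtain d1 where d1: "d1 > 0" "\<forall>h. 0 < h \<and> h < d1 \<longrightarrow>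
      \<bar>f (x + h *\<^sub>R axis j 1 + h *\<^sub>R axis i 1) - f (x + h *\<^sub>R axis i 1) - f (x + h *\<^sub>R axis j 1) + f x
       - h^2 * ?A\<bar> \<le> 3 * e * h^2"
      using schwarz_half[OF r diff gi e] by blast
    obtain d2 where d2: "d2 > 0" "\<forall>h. 0 < h \<and> h < d2 \<longrightarrow>
      \<bar>f (x + h *\<^sub>R axis i 1 + h *\<^sub>R axis j 1) - f (x + h *\<^sub>R axis j 1) - f (x + h *\<^sub>R axis i 1) + f x
       - h^2 * ?B\<bar> \<le> 3 * e * h^2"
      using schwarz_half[OF r diff gj e] by blast
    define h where "h = min d1 d2 / 2"
    have h: "0 < h" "h < d1" "h < d2" using d1 d2 by (auto simp: h_def)
    define \<Delta> where "\<Delta> = f (x + h *\<^sub>R axis j 1 + h *\<^sub>R axis i 1) - f (x + h *\<^sub>R axis i 1) - f (x + h *\<^sub>R axis j 1) + f x"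
    have c1: "\<bar>\<Delta> - h^2 * ?A\<bar> \<le> 3 * e * h^2" using d1(2) h unfolding \<Delta>_def by blast
    have c2': "\<bar>f (x + h *\<^sub>R axis i 1 + h *\<^sub>R axis j 1) - f (x + h *\<^sub>R axis j 1) - f (x + h *\<^sub>R axis i 1) + f x
       - h^2 * ?B\<bar> \<le> 3 * e * h^2" using d2(2) h by blast
    have eqD: "\<Delta> = f (x + h *\<^sub>R axis i 1 + h *\<^sub>R axis j 1) - f (x + h *\<^sub>R axis j 1) - f (x + h *\<^sub>R axis i 1) + f x"
      unfolding \<Delta>_def by (simp add: algebra_simps)
    have c2: "\<bar>\<Delta> - h^2 * ?B\<bar> \<le> 3 * e * h^2" using c2' unfolding eqD .
    have "h^2 * \<bar>?A - ?B\<bar> = \<bar>h^2 * (?A - ?B)\<bar>" by (simp add: abs_mult)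
    also have "\<dots> = \<bar>(\<Delta> - h^2 * ?B) - (\<Delta> - h^2 * ?A)\<bar>"
      by (simp add: algebra_simps)
    also have "\<dots> \<le> 6 * e * h^2" using c1 c2 abs_triangle_ineq4[of "\<Delta> - h^2 * ?B" "\<Delta> - h^2 * ?A"] by simp
    finally have "h^2 * \<bar>?A - ?B\<bar> \<le> h^2 * (6 * e)" by (simp add: mult_ac)
    thus ?thesis using h(1) by simp
  qed
  show ?thesis
  proof (rule ccontr)
    assume "?A \<noteq> ?B"
    hence "\<bar>?A - ?B\<bar> > 0" by simp
    from bnd[of "\<bar>?A - ?B\<bar> / 12"] this show False by simp
  qed
qed


lemma euler1:
  fixes F :: "real^'n::finite \<Rightarrow> real"
  assumes hom: "\<And>t x. t > 0 \<Longrightarrow> F (t *\<^sub>R x) = t * F x"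
    and dF: "F differentiable (at y)"
  shows "(\<Sum>i\<in>UNIV. y$i * pd i F y) = F y"
proof -
  let ?D = "frechet_derivative F (at y)"
  have l: "((\<lambda>t. F (t *\<^sub>R y)) has_derivative (\<lambda>t. t * ?D y)) (at 1)"
    using line_deriv[of F 0 1 y] dF by simp
  have l2: "((\<lambda>t. t * F y) has_derivative (\<lambda>t. t * ?D y)) (at 1)"
    by (rule has_derivative_transform_within_open[OF l, of "{0<..}"]) (auto simp: hom)
  have l3: "((\<lambda>t. t * F y) has_derivative (\<lambda>t. t * F y)) (at 1)"
    by (auto intro!: derivative_eq_intros)
  have "(\<lambda>t. t * ?D y) = (\<lambda>t. t * F y)" using has_derivative_unique[OF l2 l3] .
  hence "?D y = F y" by (metis mult_1)
  thus ?thesis using fd_expand[OF dF, of y] by simp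
qed

lemma pd_hom:
  fixes F :: "real^'n::finite \<Rightarrow> real"
  assumes hom: "\<And>t x. t > 0 \<Longrightarrow> F (t *\<^sub>R x) = t * F x"
    and dF: "\<And>y. y \<noteq> 0 \<Longrightarrow> F differentiable (at y)"
    and y: "y \<noteq> 0" and t: "t > 0"
  shows "pd i F (t *\<^sub>R y) = pd i F y"
proof -
  let ?D1 = "frechet_derivative F (at (t *\<^sub>R y))"
  let ?D = "frechet_derivative F (at y)"
  have ty: "t *\<^sub>R y \<noteq> 0" using y t by simp
  have D1: "(F has_derivative ?D1) (at (t *\<^sub>R y))" using fd_works[OF dF[OF ty]] .
  have D: "(F has_derivative ?D) (at y)" using fd_works[OF dF[OF y]] .
  have lin1: "linear ?D1" using D1 has_derivative_linear by blast
  have s: "((\<lambda>z. t *\<^sub>R z) has_derivative (\<lambda>h. t *\<^sub>R h)) (at y)"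
    by (auto intro!: derivative_eq_intros)
  have c1: "((\<lambda>z. F (t *\<^sub>R z)) has_derivative (\<lambda>h. ?D1 (t *\<^sub>R h))) (at y)"
    using has_derivative_compose[OF s D1] by simp
  have feq: "(\<lambda>z. F (t *\<^sub>R z)) = (\<lambda>z. t * F z)" using hom t by auto
  have c2: "((\<lambda>z. t * F z) has_derivative (\<lambda>h. t * ?D h)) (at y)"
    using D by (auto intro!: derivative_eq_intros)
  have "(\<lambda>h. ?D1 (t *\<^sub>R h)) = (\<lambda>h. t * ?D h)" using has_derivative_unique[OF c1[unfolded feq] c2] .
  hence "?D1 (t *\<^sub>R axis i 1) = t * ?D (axis i 1)" by metis
  hence "t * ?D1 (axis i 1) = t * ?D (axis i 1)" by (simp add: linear_cmul[OF lin1])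
  thus ?thesis using t unfolding pd_def by simp
qed

lemma euler2:
  fixes F :: "real^'n::finite \<Rightarrow> real"
  assumes hom: "\<And>t x. t > 0 \<Longrightarrow> F (t *\<^sub>R x) = t * F x"
    and dF: "\<And>y. y \<noteq> 0 \<Longrightarrow> F differentiable (at y)"
    and dg: "pd i F differentiable (at y)" and y: "y \<noteq> 0"
  shows "(\<Sum>j\<in>UNIV. y$j * pd j (pd i F) y) = 0"
proof -
  let ?D = "frechet_derivative (pd i F) (at y)"
  have l: "((\<lambda>t. pd i F (t *\<^sub>R y)) has_derivative (\<lambda>t. t * ?D y)) (at 1)"
    using line_deriv[of "pd i F" 0 1 y] dg by simp
  have l2: "((\<lambda>t. pd i F y) has_derivative (\<lambda>t. t * ?D y)) (at 1)"
    by (rule has_derivative_transform_within_open[OF l, of "{0<..}"]) (auto simp: pd_hom[OF hom dF y])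
  have l3: "((\<lambda>t. pd i F y) has_derivative (\<lambda>t. 0)) (at 1)"
    by (auto intro!: derivative_eq_intros)
  have "(\<lambda>t. t * ?D y) = (\<lambda>t. 0)" using has_derivative_unique[OF l2 l3] .
  hence "?D y = 0" by (metis mult_1)
  thus ?thesis using fd_expand[OF dg, of y] by simp
qed

lemma sq_pd2:
  fixes F :: "real^'n::finite \<Rightarrow> real"
  assumes f: "\<And>z. f z = c * (F z)^2"
    and dF: "\<And>y. y \<noteq> 0 \<Longrightarrow> F differentiable (at y)"
    and dg: "pd j F differentiable (at x)" and x: "x \<noteq> 0"
  shows "pd i (pd j f) x = 2 * c * (pd i F x * pd j F x + F x * pd i (pd j F) x)"
proof -
  have pdj: "pd j f y = 2 * c * (F y * pd j F y)" if y: "y \<noteq> 0" for y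
  proof -
    have "(f has_derivative (\<lambda>h. c * (frechet_derivative F (at y) h * F y + F y * frechet_derivative F (at y) h))) (at y)"
      unfolding f[abs_def] power2_eq_square
      using fd_works[OF dF[OF y]] by (auto intro!: derivative_eq_intros)
    from frechet_derivative_at[OF this] show ?thesis unfolding pd_def
      by (metis (no_types, lifting) mult.commute mult.left_commute mult_2 distrib_right)
  qed
  have "pd i (pd j f) x = pd i (\<lambda>y. 2 * c * (F y * pd j F y)) x"
    by (rule pd_local[of "-{0}"]) (use x pdj in auto)
  also have "\<dots> = 2 * c * (pd i F x * pd j F x + F x * pd i (pd j F) x)"
  proof -
    have hd: "((\<lambda>y. 2 * c * (F y * pd j F y)) has_derivative
        (\<lambda>h. 2 * c * (frechet_derivative F (at x) h * pd j F x + F x * frechet_derivative (pd j F) (at x) h))) (at x)"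
      using fd_works[OF dF[OF x]] fd_works[OF dg] by (auto intro!: derivative_eq_intros)
    have e: "frechet_derivative (\<lambda>y. 2 * c * (F y * pd j F y)) (at x) (axis i 1) =
       2 * c * (frechet_derivative F (at x) (axis i 1) * pd j F x + F x * frechet_derivative (pd j F) (at x) (axis i 1))"
      using fun_cong[OF frechet_derivative_at[OF hd], of "axis i 1"] by simp
    show ?thesis using e by (simp add: pd_def[of i])
  qed
  finally show ?thesis .
qed


lemma alg_core:
  fixes a h :: "'n::finite \<Rightarrow> 'n \<Rightarrow> real" and p v :: "'n \<Rightarrow> real"
  assumes n2: "CARD('n) \<ge> 2" and sym: "\<And>i j. a i j = a j i"
    and pdA: "\<And>w. (\<exists>i. w i \<noteq> 0) \<Longrightarrow> (\<Sum>i\<in>UNIV. \<Sum>j\<in>UNIV. a i j * w i * w j) > 0"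
    and Av: "\<And>i. (\<Sum>j\<in>UNIV. a i j * v j) = p i" and pv: "(\<Sum>i\<in>UNIV. p i * v i) = 1"
  shows "(\<Sum>i\<in>UNIV. \<Sum>j\<in>UNIV. \<Sum>k\<in>UNIV. \<Sum>l\<in>UNIV. a i j * a k l * h i k * h j l)
     \<ge> (\<Sum>i\<in>UNIV. \<Sum>j\<in>UNIV. a i j * h i j)^2 / real CARD('n) + real CARD('n) / (real CARD('n) - 1) *
        ((\<Sum>i\<in>UNIV. \<Sum>j\<in>UNIV. a i j * h i j) / real CARD('n) - (\<Sum>i\<in>UNIV. \<Sum>j\<in>UNIV. p i * p j * h i j))^2"
proof -
  have "\<exists>c. \<forall>i\<in>(UNIV::'n set). \<forall>j\<in>UNIV. a i j = (\<Sum>k\<in>(UNIV::'n set). c k i * c k j)"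
  proof -
    have P: "(\<forall>i\<in>UNIV. \<forall>j\<in>UNIV. a i j = a j i) \<and>
      (\<forall>w. (\<exists>i\<in>UNIV. w i \<noteq> 0) \<longrightarrow> 0 < (\<Sum>i\<in>UNIV. \<Sum>j\<in>UNIV. a i j * w i * w j))"
    proof (intro conjI ballI allI impI)
      fix i j show "a i j = a j i" by (rule sym)
    next
      fix w :: "'n \<Rightarrow> real" assume "\<exists>i\<in>UNIV. w i \<noteq> 0"
      thus "0 < (\<Sum>i\<in>UNIV. \<Sum>j\<in>UNIV. a i j * w i * w j)" using pdA by blast
    qed
    show ?thesis by (rule mp[OF spec[OF chol_fin[OF finite_class.finite_UNIV], of a] P])
  qed
  then obtain c where "\<forall>i\<in>(UNIV::'n set). \<forall>j\<in>UNIV. a i j = (\<Sum>k\<in>(UNIV::'n set). c k i * c k j)" by blast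
  hence ca: "\<And>i j. a i j = (\<Sum>k\<in>(UNIV::'n set). c k i * c k j)" by blast
  note T = translate(1-3)[OF ca Av pv, of h]
  note T4 = translate(4)[OF ca Av pv]
  show ?thesis unfolding T(1) T(2) T(3)
    by (rule euclid_core[OF n2 T4, where M="\<lambda>p q. \<Sum>i\<in>UNIV. \<Sum>k\<in>UNIV. c p i * h i k * c q k"])
qed

lemma final_form:
  fixes A H :: "'n::finite \<Rightarrow> 'n \<Rightarrow> real" and P :: "'n \<Rightarrow> real"
  assumes "(\<Sum>i\<in>UNIV. \<Sum>j\<in>UNIV. \<Sum>k\<in>UNIV. \<Sum>l\<in>UNIV. A i j * A k l * H i k * H j l)
     \<ge> (\<Sum>i\<in>UNIV. \<Sum>j\<in>UNIV. A i j * H i j)^2 / real CARD('n) + real CARD('n) / (real CARD('n) - 1) *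
        ((\<Sum>i\<in>UNIV. \<Sum>j\<in>UNIV. A i j * H i j) / real CARD('n) - (\<Sum>i\<in>UNIV. \<Sum>j\<in>UNIV. P i * P j * H i j))^2"
  shows "(let n = real CARD('n);
              a = A;
              Fd = P;
              h = H;
              tr = (\<Sum>i\<in>UNIV. \<Sum>j\<in>UNIV. a i j * h i j)
          in (\<Sum>i\<in>UNIV. \<Sum>j\<in>UNIV. \<Sum>k\<in>UNIV. \<Sum>l\<in>UNIV. a i j * a k l * h i k * h j l)
             \<ge> tr^2 / n + n / (n - 1) * (tr / n - (\<Sum>i\<in>UNIV. \<Sum>j\<in>UNIV. Fd i * Fd j * h i j))^2)"
  unfolding Let_def using assms .

theorem lemma2p4:
  fixes F :: "real^'n \<Rightarrow> real" and u :: "real^'n \<Rightarrow> real"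
    and U :: "(real^'n) set" and x :: "real^'n"
  assumes "CARD('n) \<ge> 2"
    and "strongly_convex_Norm F"
    and "Ck 3 F (- {0})"
    and "open U" and "Ck 2 u U"
    and "x \<in> U" and "grad u x \<noteq> 0"
  shows "(let n = real CARD('n);
              a = (\<lambda>i j. pd i (pd j (\<lambda>\<xi>. (F \<xi>)^2 / 2)) (grad u x));
              Fd = (\<lambda>i. pd i F (grad u x));
              h = (\<lambda>i j. pd i (pd j u) x);
              tr = (\<Sum>i\<in>UNIV. \<Sum>j\<in>UNIV. a i j * h i j)
          in (\<Sum>i\<in>UNIV. \<Sum>j\<in>UNIV. \<Sum>k\<in>UNIV. \<Sum>l\<in>UNIV. a i j * a k l * h i k * h j l)
             \<ge> tr^2 / n + n / (n - 1) * (tr / n - (\<Sum>i\<in>UNIV. \<Sum>j\<in>UNIV. Fd i * Fd j * h i j))^2)"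
proof -
  let ?\<xi> = "grad u x"
  have xi: "?\<xi> \<noteq> 0" using assms(7) .
  have nF: "is_Norm F" and sc: "\<And>\<xi> v. \<xi> \<noteq> 0 \<Longrightarrow> v \<noteq> 0 \<Longrightarrow>
        (\<Sum>i\<in>UNIV. \<Sum>j\<in>UNIV. pd i (pd j (\<lambda>z. (F z)^2)) \<xi> * v$i * v$j) > 0"
    using assms(2) unfolding strongly_convex_Norm_def by auto
  have hom: "\<And>t y. t > 0 \<Longrightarrow> F (t *\<^sub>R y) = t * F y" and Fpos: "F ?\<xi> > 0"
    using nF xi unfolding is_Norm_def by auto
  have C3: "Ck 3 F (- {0})" by fact
  have dF: "\<And>y. y \<noteq> 0 \<Longrightarrow> F differentiable (at y)"
    and dpF: "\<And>i y. y \<noteq> 0 \<Longrightarrow> pd i F differentiable (at y)"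
    using C3 by (auto simp: eval_nat_numeral)
  have ballnz: "\<And>y. y \<in> ball ?\<xi> (norm ?\<xi>) \<Longrightarrow> y \<noteq> 0" by (auto simp: dist_norm)
  have sF: "pd j (pd i F) ?\<xi> = pd i (pd j F) ?\<xi>" for i j
  proof (rule schwarz[of "norm ?\<xi>"])
    show "norm ?\<xi> > 0" using xi by simp
    show "\<And>y. y \<in> ball ?\<xi> (norm ?\<xi>) \<Longrightarrow> F differentiable (at y)" using ballnz dF by blast
    show "pd i F differentiable (at ?\<xi>)" by (rule dpF[OF xi])
    show "pd j F differentiable (at ?\<xi>)" by (rule dpF[OF xi])
  qed
  define a where "a = (\<lambda>i j. pd i (pd j (\<lambda>\<xi>. (F \<xi>)^2 / 2)) ?\<xi>)"
  define Fd where "Fd = (\<lambda>i. pd i F ?\<xi>)"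
  have aform: "a i j = Fd i * Fd j + F ?\<xi> * pd i (pd j F) ?\<xi>" for i j
  proof -
    have "pd i (pd j (\<lambda>\<xi>. (F \<xi>)^2 / 2)) ?\<xi> = 2 * (1/2) * (pd i F ?\<xi> * pd j F ?\<xi> + F ?\<xi> * pd i (pd j F) ?\<xi>)"
      by (rule sq_pd2[OF _ dF dpF[OF xi] xi]) simp
    thus ?thesis unfolding a_def Fd_def by simp
  qed
  have hform: "pd i (pd j (\<lambda>z. (F z)^2)) ?\<xi> = 2 * a i j" for i j
  proof -
    have "pd i (pd j (\<lambda>z. (F z)^2)) ?\<xi> = 2 * 1 * (pd i F ?\<xi> * pd j F ?\<xi> + F ?\<xi> * pd i (pd j F) ?\<xi>)"
      by (rule sq_pd2[OF _ dF dpF[OF xi] xi]) simp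
    thus ?thesis unfolding aform Fd_def by simp
  qed
  have sym: "\<And>i j. a i j = a j i" unfolding aform using sF by (simp add: mult.commute)
  have pdA: "(\<Sum>i\<in>UNIV. \<Sum>j\<in>UNIV. a i j * w i * w j) > 0" if "\<exists>i. w i \<noteq> 0" for w
  proof -
    have "(\<chi> i. w i) \<noteq> 0" using that by (metis vec_lambda_beta zero_index)
    from sc[OF xi this] have "(\<Sum>i\<in>UNIV. \<Sum>j\<in>UNIV. 2 * a i j * w i * w j) > 0" by (simp add: hform)
    hence "2 * (\<Sum>i\<in>UNIV. \<Sum>j\<in>UNIV. a i j * w i * w j) > 0" by (simp add: sum_distrib_left mult.assoc)
    thus ?thesis by simp
  qed
  define v where "v = (\<lambda>j. ?\<xi>$j / F ?\<xi>)"
  have e1: "(\<Sum>j\<in>UNIV. ?\<xi>$j * Fd j) = F ?\<xi>" unfolding Fd_def by (rule euler1[OF hom dF[OF xi]])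
  have e2: "(\<Sum>j\<in>UNIV. ?\<xi>$j * pd i (pd j F) ?\<xi>) = 0" for i
  proof -
    have "(\<Sum>j\<in>UNIV. ?\<xi>$j * pd i (pd j F) ?\<xi>) = (\<Sum>j\<in>UNIV. ?\<xi>$j * pd j (pd i F) ?\<xi>)"
      by (rule sum.cong[OF refl]) (simp only: sF)
    also have "\<dots> = 0" by (rule euler2[OF hom dF dpF[OF xi] xi])
    finally show ?thesis .
  qed
  have Ax: "(\<Sum>j\<in>UNIV. a i j * ?\<xi>$j) = Fd i * F ?\<xi>" for i
  proof -
    have "(\<Sum>j\<in>UNIV. a i j * ?\<xi>$j) = Fd i * (\<Sum>j\<in>UNIV. ?\<xi>$j * Fd j) + F ?\<xi> * (\<Sum>j\<in>UNIV. ?\<xi>$j * pd i (pd j F) ?\<xi>)"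
    proof -
      have "(\<Sum>j\<in>UNIV. a i j * ?\<xi>$j) = (\<Sum>j\<in>UNIV. Fd i * (?\<xi>$j * Fd j) + F ?\<xi> * (?\<xi>$j * pd i (pd j F) ?\<xi>))"
        by (rule sum.cong[OF refl]) (simp add: aform algebra_simps)
      also have "\<dots> = Fd i * (\<Sum>j\<in>UNIV. ?\<xi>$j * Fd j) + F ?\<xi> * (\<Sum>j\<in>UNIV. ?\<xi>$j * pd i (pd j F) ?\<xi>)"
        by (simp add: sum.distrib sum_distrib_left)
      finally show ?thesis .
    qed
    thus ?thesis by (simp add: e1 e2)
  qed
  have Av: "(\<Sum>j\<in>UNIV. a i j * v j) = Fd i" for i
  proof -
    have "(\<Sum>j\<in>UNIV. a i j * v j) = (\<Sum>j\<in>UNIV. a i j * ?\<xi>$j) / F ?\<xi>"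
      unfolding v_def by (simp add: sum_divide_distrib)
    thus ?thesis using Fpos Ax by simp
  qed
  have pv: "(\<Sum>i\<in>UNIV. Fd i * v i) = 1"
  proof -
    have "(\<Sum>i\<in>UNIV. Fd i * v i) = (\<Sum>j\<in>UNIV. ?\<xi>$j * Fd j) / F ?\<xi>"
      unfolding v_def by (simp add: sum_divide_distrib mult.commute)
    thus ?thesis using Fpos e1 by simp
  qed
  have main: "(\<Sum>i\<in>UNIV. \<Sum>j\<in>UNIV. \<Sum>k\<in>UNIV. \<Sum>l\<in>UNIV. a i j * a k l * pd i (pd k u) x * pd j (pd l u) x)
     \<ge> (\<Sum>i\<in>UNIV. \<Sum>j\<in>UNIV. a i j * pd i (pd j u) x)^2 / real CARD('n) + real CARD('n) / (real CARD('n) - 1) *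
        ((\<Sum>i\<in>UNIV. \<Sum>j\<in>UNIV. a i j * pd i (pd j u) x) / real CARD('n) - (\<Sum>i\<in>UNIV. \<Sum>j\<in>UNIV. Fd i * Fd j * pd i (pd j u) x))^2"
    by (rule alg_core[OF assms(1) sym pdA Av pv])
  show ?thesis by (rule final_form[OF main[unfolded a_def Fd_def]])
qed

end
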